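(* Let $(\mathfrak g,\cdot,N)$ and $(\mathfrak g^*,\circ,S^* )$ be finite-dimensional Nijenhuis perm algebras (with $S:\mathfrak g\to\mathfrak g$ linear and $S^*$ its dual), and let $((\mathfrak g\oplus\mathfrak g^*,N+S^*,\mathfrak B),(\mathfrak g,N),(\mathfrak g^*,S^* ))$ be a Manin triple of NF perm algebras. Then: (1) the adjoint of $N+S^*$ with respect to $\mathfrak B$ is $S+N^*$, and $S+N^*$ is admissible to the Nijenhuis perm algebra $(\mathfrak g\oplus\mathfrak g^*,N+S^* )$; (2) $S$ is admissible to $(\mathfrak g,N)$; (3) $N^*$ is admissible to $(\mathfrak g^*,S^* )$.
   Context: Over a field $K$. A (right) perm algebra: bilinear product with $(xy)z=x(yz)=x(zy)$. A Nijenhuis operator $N$ on a perm algebra: $N(x)N(y)+N^2(xy)=N(N(x)y)+N(xN(y))$. A bilinear form $\mathfrak B$ is invariant if $\mathfrak B(xy,z)=\mathfrak B(y,zx)-\mathfrak B(y,xz)$. An NF perm algebra is a triple $(A,N,\mathfrak B)$ with $(A,N)$ a Nijenhuis perm algebra and $\mathfrak B$ a nondegenerate invariant bilinear form; the adjoint $\widehat N$ of $N$ is defined by $\mathfrak B(N(x),y)=\mathfrak B(x,\widehat N(y))$. A Manin triple of Frobenius perm algebra associated to $(\mathfrak g,\cdot)$ and $(\mathfrak g^*,\circ)$ is a perm algebra structure on $\mathfrak g\oplus\mathfrak g^*$ containing $(\mathfrak g,\cdot)$ and $(\mathfrak g^*,\circ)$ as subalgebras for which the form $\mathfrak B(x+a,y+b)=\langle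 x,b\rangle-\langle y,a\rangle$ ($x,y\in\mathfrak g$, $a,b\in\mathfrak g^*$) is invariant. A Manin triple of NF perm algebra $((\mathfrak g\oplus\mathfrak g^*,N+S^*,\mathfrak B),(\mathfrak g,N),(\mathfrak g^*,S^* ))$ is such a Manin triple for which $(\mathfrak g\oplus\mathfrak g^*,N+S^*,\mathfrak B)$ is an NF perm algebra, where $(N+S^* )(x+a)=N(x)+S^*(a)$; similarly $(S+N^* )(x+a)=S(x)+N^*(a)$ with $N^*$ the dual of $N$. A linear map $S$ on a Nijenhuis perm algebra $(A,N)$ is admissible to $(A,N)$ if for all $x,y\in A$: $S(N(x)y)+xS^2(y)-N(x)S(y)-S(xS(y))=0$ and $S(xN(y))+S^2(x)y-S(x)N(y)-S(S(x)y)=0$. *)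

theory Defs
  imports Main "HOL-Library.Function_Algebras" "HOL-Library.Product_Plus"
begin

text \<open>The finite-dimensional space g is modelled as 'n => 'k ('n a finite index type,
 'k a field), its dual g* as another copy of 'n => 'k with the standard pairing
 <x,a> = sum_i x i * a i, and g (+) g* as the product type.\<close>

type_synonym ('n,'k) vsp = "'n \<Rightarrow> 'k"

definition sc :: "'k::field \<Rightarrow> ('n,'k) vsp \<Rightarrow> ('n,'k) vsp" where
  "sc c x = (\<lambda>i. c * x i)"

definition scd :: "'k::field \<Rightarrow> ('n,'k) vsp \<times> ('n,'k) vsp \<Rightarrow> ('n,'k) vsp \<times> ('n,'k) vsp" where
  "scd c p = (sc c (fst p), sc c (snd p))"

definition linear_map :: "('k \<Rightarrow> 'v::plus \<Rightarrow> 'v) \<Rightarrow> ('v \<Rightarrow> 'v) \<Rightarrow> bool" where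
  "linear_map s f \<longleftrightarrow> (\<forall>x y. f (x + y) = f x + f y) \<and> (\<forall>c x. f (s c x) = s c (f x))"

definition bilinear_prod :: "('k \<Rightarrow> 'v::plus \<Rightarrow> 'v) \<Rightarrow> ('v \<Rightarrow> 'v \<Rightarrow> 'v) \<Rightarrow> bool" where
  "bilinear_prod s m \<longleftrightarrow> (\<forall>y. linear_map s (\<lambda>x. m x y)) \<and> (\<forall>x. linear_map s (\<lambda>y. m x y))"

definition bilinear_form :: "('k::comm_ring \<Rightarrow> 'v::plus \<Rightarrow> 'v) \<Rightarrow> ('v \<Rightarrow> 'v \<Rightarrow> 'k) \<Rightarrow> bool" where
  "bilinear_form s B \<longleftrightarrow>
     (\<forall>x x' y. B (x + x') y = B x y + B x' y) \<and> (\<forall>c x y. B (s c x) y = c * B x y) \<and>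
     (\<forall>x y y'. B x (y + y') = B x y + B x y') \<and> (\<forall>c x y. B x (s c y) = c * B x y)"

definition perm_algebra :: "('k \<Rightarrow> 'v::plus \<Rightarrow> 'v) \<Rightarrow> ('v \<Rightarrow> 'v \<Rightarrow> 'v) \<Rightarrow> bool" where
  "perm_algebra s m \<longleftrightarrow> bilinear_prod s m \<and>
     (\<forall>x y z. m (m x y) z = m x (m y z) \<and> m x (m y z) = m x (m z y))"

definition nijenhuis_perm :: "('k \<Rightarrow> 'v::plus \<Rightarrow> 'v) \<Rightarrow> ('v \<Rightarrow> 'v \<Rightarrow> 'v) \<Rightarrow> ('v \<Rightarrow> 'v) \<Rightarrow> bool" where
  "nijenhuis_perm s m N \<longleftrightarrow> perm_algebra s m \<and> linear_map s N \<and>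
     (\<forall>x y. m (N x) (N y) + N (N (m x y)) = N (m (N x) y) + N (m x (N y)))"

definition invariant_form :: "('k::comm_ring \<Rightarrow> 'v::plus \<Rightarrow> 'v) \<Rightarrow> ('v \<Rightarrow> 'v \<Rightarrow> 'v) \<Rightarrow> ('v \<Rightarrow> 'v \<Rightarrow> 'k) \<Rightarrow> bool" where
  "invariant_form s m B \<longleftrightarrow> bilinear_form s B \<and>
     (\<forall>x y z. B (m x y) z = B y (m z x) - B y (m x z))"

definition nondegenerate :: "('v::zero \<Rightarrow> 'v \<Rightarrow> 'k::zero) \<Rightarrow> bool" where
  "nondegenerate B \<longleftrightarrow> (\<forall>x. (\<forall>y. B x y = 0) \<longrightarrow> x = 0) \<and> (\<forall>y. (\<forall>x. B x y = 0) \<longrightarrow> y = 0)"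

definition NF_perm :: "('k::comm_ring \<Rightarrow> 'v::{plus,zero} \<Rightarrow> 'v) \<Rightarrow> ('v \<Rightarrow> 'v \<Rightarrow> 'v) \<Rightarrow> ('v \<Rightarrow> 'v) \<Rightarrow> ('v \<Rightarrow> 'v \<Rightarrow> 'k) \<Rightarrow> bool" where
  "NF_perm s m N B \<longleftrightarrow> nijenhuis_perm s m N \<and> invariant_form s m B \<and> nondegenerate B"

definition is_adjoint :: "('v \<Rightarrow> 'v \<Rightarrow> 'k) \<Rightarrow> ('v \<Rightarrow> 'v) \<Rightarrow> ('v \<Rightarrow> 'v) \<Rightarrow> bool" where
  "is_adjoint B N Nh \<longleftrightarrow> (\<forall>x y. B (N x) y = B x (Nh y))"

definition admissible :: "('k \<Rightarrow> 'v::{plus,minus,zero} \<Rightarrow> 'v) \<Rightarrow> ('v \<Rightarrow> 'v \<Rightarrow> 'v) \<Rightarrow> ('v \<Rightarrow> 'v) \<Rightarrow> ('v \<Rightarrow> 'v) \<Rightarrow> bool" where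
  "admissible s m N S \<longleftrightarrow> nijenhuis_perm s m N \<and> linear_map s S \<and>
     (\<forall>x y. S (m (N x) y) + m x (S (S y)) - m (N x) (S y) - S (m x (S y)) = 0) \<and>
     (\<forall>x y. S (m x (N y)) + m (S (S x)) y - m (S x) (N y) - S (m (S x) y) = 0)"

definition pairing :: "('n::finite,'k::field) vsp \<Rightarrow> ('n,'k) vsp \<Rightarrow> 'k" where
  "pairing x a = (\<Sum>i\<in>UNIV. x i * a i)"

definition unitv :: "'n \<Rightarrow> ('n,'k::field) vsp" where
  "unitv j = (\<lambda>i. if i = j then 1 else 0)"

text \<open>Dual map f*: g* -> g*, characterised by <f x, a> = <x, f* a>.\<close>
definition dual_map :: "(('n::finite,'k::field) vsp \<Rightarrow> ('n,'k) vsp) \<Rightarrow> ('n,'k) vsp \<Rightarrow> ('n,'k) vsp" where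
  "dual_map f a = (\<lambda>j. \<Sum>i\<in>UNIV. a i * f (unitv j) i)"

definition BB :: "('n::finite,'k::field) vsp \<times> ('n,'k) vsp \<Rightarrow> ('n,'k) vsp \<times> ('n,'k) vsp \<Rightarrow> 'k" where
  "BB p q = pairing (fst p) (snd q) - pairing (fst q) (snd p)"

definition sumop :: "('a \<Rightarrow> 'a) \<Rightarrow> ('b \<Rightarrow> 'b) \<Rightarrow> 'a \<times> 'b \<Rightarrow> 'a \<times> 'b" where
  "sumop T1 T2 p = (T1 (fst p), T2 (snd p))"

definition manin_triple_frob ::
  "(('n::finite,'k::field) vsp \<Rightarrow> ('n,'k) vsp \<Rightarrow> ('n,'k) vsp) \<Rightarrow> (('n,'k) vsp \<Rightarrow> ('n,'k) vsp \<Rightarrow> ('n,'k) vsp)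
   \<Rightarrow> (('n,'k) vsp \<times> ('n,'k) vsp \<Rightarrow> ('n,'k) vsp \<times> ('n,'k) vsp \<Rightarrow> ('n,'k) vsp \<times> ('n,'k) vsp) \<Rightarrow> bool" where
  "manin_triple_frob mul circ mD \<longleftrightarrow>
     perm_algebra sc mul \<and> perm_algebra sc circ \<and> perm_algebra scd mD \<and>
     (\<forall>x y. mD (x, 0) (y, 0) = (mul x y, 0)) \<and>
     (\<forall>a b. mD (0, a) (0, b) = (0, circ a b)) \<and>
     invariant_form scd mD BB"

definition manin_triple_NF where
  "manin_triple_NF mul N circ Sd mD \<longleftrightarrow>
     manin_triple_frob mul circ mD \<and> nijenhuis_perm sc mul N \<and> nijenhuis_perm sc circ Sd \<and>
     NF_perm scd mD (sumop N Sd) BB"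

end

theory Submission
  imports Defs
begin


lemma fun_sum_apply: "finite A \<Longrightarrow> (sum g A) i = sum (\<lambda>j. g j i) A"
  by (induction A rule: finite_induct) auto

lemma lin_zero: "linear_map s f \<Longrightarrow> f 0 = (0::'v::ab_group_add)"
proof -
  assume "linear_map s f"
  hence "f 0 = f 0 + f 0" by (metis add_0 linear_map_def)
  thus ?thesis by simp
qed

lemma lin_sum:
  fixes f :: "'v::ab_group_add \<Rightarrow> 'v"
  assumes lf: "linear_map s f" and "finite A"
  shows "f (sum g A) = sum (\<lambda>j. f (g j)) (A::'a set)"
  using assms(2)
proof (induction A rule: finite_induct)
  case empty then show ?case using lf by (simp add: lin_zero)
next
  case (insert a A) then show ?case using lf by (simp add: linear_map_def)
qed

lemma vec_decomp: "x = (\<Sum>j\<in>UNIV. sc (x j) (unitv j :: ('n::finite,'k::field) vsp))"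
  by (rule ext) (simp add: fun_sum_apply sc_def unitv_def if_distrib eq_commute cong: if_cong)

lemma dual_pairing:
  fixes f :: "('n::finite,'k::field) vsp \<Rightarrow> ('n,'k) vsp"
  assumes "linear_map sc f"
  shows "pairing (f x) a = pairing x (dual_map f a)"
proof -
  have "f x = (\<Sum>j\<in>UNIV. f (sc (x j) (unitv j)))"
    by (subst vec_decomp[of x]) (rule lin_sum[OF assms], simp)
  also have "\<dots> = (\<Sum>j\<in>UNIV. sc (x j) (f (unitv j)))"
    using assms by (simp add: linear_map_def)
  finally have fx: "\<And>i. f x i = (\<Sum>j\<in>UNIV. x j * f (unitv j) i)"
    by (simp add: fun_sum_apply sc_def)
  show ?thesis
    unfolding pairing_def dual_map_def fx
    by (simp add: sum_distrib_left sum_distrib_right mult_ac) (rule sum.swap)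
qed



lemma adj_admissible:
  fixes m :: "'v::ab_group_add \<Rightarrow> 'v \<Rightarrow> 'v" and B :: "'v \<Rightarrow> 'v \<Rightarrow> 'k::comm_ring"
    and N Nh :: "'v \<Rightarrow> 'v"
  assumes Badd1: "\<And>x y z. B (x+y) z = B x z + B y z"
    and Badd2: "\<And>x y z. B x (y+z) = B x y + B x z"
    and Nadd: "\<And>x y. N (x+y) = N x + N y"
    and Nhadd: "\<And>x y. Nh (x+y) = Nh x + Nh y"
    and anti: "\<And>x y. B x y = - B y x"
    and inv: "\<And>x y z. B (m x y) z = B y (m z x) - B y (m x z)"
    and nij: "\<And>x y. m (N x) (N y) + N (N (m x y)) = N (m (N x) y) + N (m x (N y))"
    and adj: "\<And>x y. B (N x) y = B x (Nh y)"
    and nd: "\<And>y. (\<forall>x. B x y = 0) \<Longrightarrow> y = 0"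
  shows "Nh (m (N x) y) + m x (Nh (Nh y)) - m (N x) (Nh y) - Nh (m x (Nh y)) = 0"
    and "Nh (m x (N y)) + m (Nh (Nh x)) y - m (Nh x) (N y) - Nh (m (Nh x) y) = 0"
proof -
  have Bd2: "B x (y - z) = B x y - B x z" for x y z
    by (metis Badd2 add_diff_cancel eq_diff_eq)
  have Bd1: "B (y - z) x = B y x - B z x" for x y z
    by (metis Badd1 add_diff_cancel eq_diff_eq)
  have Nd: "N (y - z) = N y - N z" for y z
    by (metis Nadd add_diff_cancel eq_diff_eq)
  have B0: "B x 0 = 0" for x
    by (metis Bd2 diff_self)
  have F1: "B w (m p q) = B q (m p w) - B q (m w p)" for w p q
    using anti[of w "m p q"] inv[of p q w] by simp
  have F3: "B (Nh u) v = B u (N v)" for u v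
  proof -
    have "B (Nh u) v = - B v (Nh u)" by (rule anti)
    also have "\<dots> = - B (N v) u" by (simp add: adj)
    also have "\<dots> = B u (N v)" using anti[of u "N v"] by simp
    finally show ?thesis .
  qed
  have R: "B (m y x) z = B y (m z x)" for x y z
  proof -
    have "B y (m x z) = - B (m x z) y" by (rule anti)
    also have "\<dots> = - (B z (m y x) - B z (m x y))" by (simp add: inv)
    also have "\<dots> = B (m y x) z - B (m x y) z"
      using anti[of z "m y x"] anti[of z "m x y"] by simp
    finally show ?thesis using inv[of x y z] by (simp add: algebra_simps)
  qed
  have G: "B w (m p q) = - B p (m w q)" for w p q
    using anti[of w "m p q"] by (simp add: R)
  have z: "m (N x) (N y) + N (N (m x y)) - N (m (N x) y) - N (m x (N y)) = 0" for x y
    using nij[of x y] by (simp add: algebra_simps)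
  show "Nh (m (N x) y) + m x (Nh (Nh y)) - m (N x) (Nh y) - Nh (m x (Nh y)) = 0"
  proof (rule nd, rule allI)
    fix w
    let ?E = "Nh (m (N x) y) + m x (Nh (Nh y)) - m (N x) (Nh y) - Nh (m x (Nh y))"
    have "B w ?E = B w (Nh (m (N x) y)) + B w (m x (Nh (Nh y))) - B w (m (N x) (Nh y)) - B w (Nh (m x (Nh y)))"
      by (simp add: Badd2 Bd2)
    also have "\<dots> = B (N w) (m (N x) y) + B w (m x (Nh (Nh y))) - B w (m (N x) (Nh y)) - B (N w) (m x (Nh y))"
      by (simp add: adj)
    also have "\<dots> = (B y (m (N x) (N w)) - B y (m (N w) (N x))) + (B (Nh (Nh y)) (m x w) - B (Nh (Nh y)) (m w x))
         - (B (Nh y) (m (N x) w) - B (Nh y) (m w (N x))) - (B (Nh y) (m x (N w)) - B (Nh y) (m (N w) x))"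
      using F1[where w="N w" and p="N x" and q=y] F1[where w=w and p=x and q="Nh (Nh y)"]
        F1[where w=w and p="N x" and q="Nh y"] F1[where w="N w" and p=x and q="Nh y"]
      by (simp only:)
    also have "\<dots> = (B y (m (N x) (N w)) - B y (m (N w) (N x))) + (B y (N (N (m x w))) - B y (N (N (m w x))))
         - (B y (N (m (N x) w)) - B y (N (m w (N x)))) - (B y (N (m x (N w))) - B y (N (m (N w) x)))"
      by (simp only: F3)
    also have "\<dots> = B y ((m (N x) (N w) + N (N (m x w)) - N (m (N x) w) - N (m x (N w)))
          - (m (N w) (N x) + N (N (m w x)) - N (m (N w) x) - N (m w (N x))))"
      by (simp add: Badd2 Bd2 algebra_simps)
    also have "\<dots> = 0" by (simp only: z diff_self B0)
    finally show "B w ?E = 0" .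
  qed
  show "Nh (m x (N y)) + m (Nh (Nh x)) y - m (Nh x) (N y) - Nh (m (Nh x) y) = 0"
  proof (rule nd, rule allI)
    fix w
    let ?E = "Nh (m x (N y)) + m (Nh (Nh x)) y - m (Nh x) (N y) - Nh (m (Nh x) y)"
    have "B w ?E = B w (Nh (m x (N y))) + B w (m (Nh (Nh x)) y) - B w (m (Nh x) (N y)) - B w (Nh (m (Nh x) y))"
      by (simp add: Badd2 Bd2)
    also have "\<dots> = B (N w) (m x (N y)) + B w (m (Nh (Nh x)) y) - B w (m (Nh x) (N y)) - B (N w) (m (Nh x) y)"
      by (simp add: adj)
    also have "\<dots> = - B x (m (N w) (N y)) - B (Nh (Nh x)) (m w y) + B (Nh x) (m w (N y)) + B (Nh x) (m (N w) y)"
      using G[where w="N w" and p=x and q="N y"] G[where w=w and p="Nh (Nh x)" and q=y]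
        G[where w=w and p="Nh x" and q="N y"] G[where w="N w" and p="Nh x" and q=y]
      by (simp only:) (simp add: algebra_simps)
    also have "\<dots> = - B x (m (N w) (N y)) - B x (N (N (m w y))) + B x (N (m w (N y))) + B x (N (m (N w) y))"
      by (simp only: F3)
    also have "\<dots> = - B x (m (N w) (N y) + N (N (m w y)) - N (m (N w) y) - N (m w (N y)))"
      by (simp add: Badd2 Bd2 algebra_simps)
    also have "\<dots> = 0" by (simp only: z B0 neg_equal_0_iff_equal)
    finally show "B w ?E = 0" .
  qed
qed


lemma lin_dual: "linear_map sc (dual_map (f :: ('n::finite,'k::field) vsp \<Rightarrow> ('n,'k) vsp))"
  unfolding linear_map_def dual_map_def sc_def
  by (auto simp: sum.distrib distrib_right sum_distrib_left mult.assoc fun_eq_iff)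

lemma lin_sumop:
  assumes "linear_map sc (f :: ('n::finite,'k::field) vsp \<Rightarrow> ('n,'k) vsp)" "linear_map sc (g :: ('n,'k) vsp \<Rightarrow> ('n,'k) vsp)"
  shows "linear_map scd (sumop f g)"
  using assms unfolding linear_map_def sumop_def scd_def by auto

lemma dual_zero: "dual_map (f :: ('n::finite,'k::field) vsp \<Rightarrow> ('n,'k) vsp) 0 = 0"
  by (rule lin_zero[OF lin_dual])

theorem lemma2p21:
  fixes mul circ :: "('n::finite \<Rightarrow> 'k::field) \<Rightarrow> ('n \<Rightarrow> 'k) \<Rightarrow> ('n \<Rightarrow> 'k)"
    and N S :: "('n \<Rightarrow> 'k) \<Rightarrow> ('n \<Rightarrow> 'k)"
    and mD :: "('n \<Rightarrow> 'k) \<times> ('n \<Rightarrow> 'k) \<Rightarrow> ('n \<Rightarrow> 'k) \<times> ('n \<Rightarrow> 'k) \<Rightarrow> ('n \<Rightarrow> 'k) \<times> ('n \<Rightarrow> 'k)"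
  assumes "nijenhuis_perm sc mul N"
    and "linear_map sc S"
    and "nijenhuis_perm sc circ (dual_map S)"
    and "manin_triple_NF mul N circ (dual_map S) mD"
  shows "(is_adjoint BB (sumop N (dual_map S)) (sumop S (dual_map N)) \<and>
          admissible scd mD (sumop N (dual_map S)) (sumop S (dual_map N))) \<and>
         admissible sc mul N S \<and>
         admissible sc circ (dual_map S) (dual_map N)"
proof -
  note M = assms(4)[unfolded manin_triple_NF_def manin_triple_frob_def NF_perm_def]
  have sub1: "\<And>x y. mD (x, 0) (y, 0) = (mul x y, 0)" using M by blast
  have sub2: "\<And>a b. mD (0, a) (0, b) = (0, circ a b)" using M by blast
  have invD: "invariant_form scd mD BB" using M by blast
  have nijD: "nijenhuis_perm scd mD (sumop N (dual_map S))" using M by blast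
  have ndD: "nondegenerate (BB :: ('n \<Rightarrow> 'k) \<times> ('n \<Rightarrow> 'k) \<Rightarrow> _)" using M by blast
  have linN: "linear_map sc N" using assms(1) by (simp add: nijenhuis_perm_def)
  have linS: "linear_map sc S" by (rule assms(2))
  have linSh: "linear_map scd (sumop S (dual_map N))" by (rule lin_sumop[OF linS lin_dual])
  have linNh: "linear_map scd (sumop N (dual_map S))" by (rule lin_sumop[OF linN lin_dual])
  have adjD: "is_adjoint BB (sumop N (dual_map S)) (sumop S (dual_map N))"
    unfolding is_adjoint_def BB_def sumop_def
    by (simp add: dual_pairing[OF linN] dual_pairing[OF linS])
  have bf: "bilinear_form scd (BB :: (('n \<Rightarrow> 'k) \<times> ('n \<Rightarrow> 'k)) \<Rightarrow> _)" using invD by (simp add: invariant_form_def)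
  note E = adj_admissible[where m=mD and B=BB and N="sumop N (dual_map S)" and Nh="sumop S (dual_map N)"]
  have hyps: "\<And>x y z. BB (x+y) (z::(('n \<Rightarrow> 'k) \<times> ('n \<Rightarrow> 'k))) = BB x z + BB y z"
     "\<And>x y z. BB (x::(('n \<Rightarrow> 'k) \<times> ('n \<Rightarrow> 'k))) (y+z) = BB x y + BB x z"
     "\<And>x y. sumop N (dual_map S) (x+y) = sumop N (dual_map S) x + sumop N (dual_map S) y"
     "\<And>x y. sumop S (dual_map N) (x+y) = sumop S (dual_map N) x + sumop S (dual_map N) y"
     "\<And>x y. BB (x::(('n \<Rightarrow> 'k) \<times> ('n \<Rightarrow> 'k))) y = - BB y x"
     "\<And>x y z. BB (mD x y) z = BB y (mD z x) - BB y (mD x z)"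
     "\<And>x y. mD (sumop N (dual_map S) x) (sumop N (dual_map S) y) + sumop N (dual_map S) (sumop N (dual_map S) (mD x y))
        = sumop N (dual_map S) (mD (sumop N (dual_map S) x) y) + sumop N (dual_map S) (mD x (sumop N (dual_map S) y))"
     "\<And>x y. BB (sumop N (dual_map S) x) y = BB x (sumop S (dual_map N) y)"
     "\<And>y. (\<forall>x. BB x (y::(('n \<Rightarrow> 'k) \<times> ('n \<Rightarrow> 'k))) = 0) \<Longrightarrow> y = 0"
    using bf linNh linSh invD nijD adjD ndD
    unfolding bilinear_form_def linear_map_def invariant_form_def nijenhuis_perm_def is_adjoint_def nondegenerate_def
    by (auto simp: BB_def)
  note E1 = E(1)[OF hyps] and E2 = E(2)[OF hyps]
  have admD: "admissible scd mD (sumop N (dual_map S)) (sumop S (dual_map N))"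
    unfolding admissible_def using nijD linSh E1 E2 by blast
  have N0: "N 0 = 0" by (rule lin_zero[OF linN])
  have S0: "S 0 = 0" by (rule lin_zero[OF linS])
  have adm_g: "admissible sc mul N S"
    unfolding admissible_def
  proof (intro conjI allI)
    fix x y
    show "S (mul (N x) y) + mul x (S (S y)) - mul (N x) (S y) - S (mul x (S y)) = 0"
      using arg_cong[OF E1[of "(x,0)" "(y,0)"], of fst]
      by (simp add: sumop_def sub1 dual_zero)
    show "S (mul x (N y)) + mul (S (S x)) y - mul (S x) (N y) - S (mul (S x) y) = 0"
      using arg_cong[OF E2[of "(x,0)" "(y,0)"], of fst]
      by (simp add: sumop_def sub1 dual_zero)
  qed (simp_all add: assms)
  have adm_d: "admissible sc circ (dual_map S) (dual_map N)"
    unfolding admissible_def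
  proof (intro conjI allI)
    fix x y
    show "dual_map N (circ (dual_map S x) y) + circ x (dual_map N (dual_map N y)) - circ (dual_map S x) (dual_map N y) - dual_map N (circ x (dual_map N y)) = 0"
      using arg_cong[OF E1[of "(0,x)" "(0,y)"], of snd]
      by (simp add: sumop_def sub2 N0 S0)
    show "dual_map N (circ x (dual_map S y)) + circ (dual_map N (dual_map N x)) y - circ (dual_map N x) (dual_map S y) - dual_map N (circ (dual_map N x) y) = 0"
      using arg_cong[OF E2[of "(0,x)" "(0,y)"], of snd]
      by (simp add: sumop_def sub2 N0 S0)
  qed (simp_all add: assms lin_dual)
  show ?thesis using adjD admD adm_g adm_d by blast
qed

end
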